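(* Let $I\subset\mathbb{B}[x^{\pm1}]$ be the zero-dimensional tropical ideal of degree $2$ corresponding to the sublattice $4\mathbb{Z}\subset\mathbb{Z}$, i.e. the tropical ideal whose polynomials of minimal support are the binomials $x^u\oplus x^v$ with $u\neq v$, $u-v\in4\mathbb{Z}$, and the trinomials $x^u\oplus x^v\oplus x^w$ with $u,v,w$ pairwise incongruent modulo $4$. Then there is no field $K$ of characteristic $2$ and ideal $J\subset K[x^{\pm1}]$ with $I=\operatorname{trop}(J)$.
   Context: $\mathbb{B}=\{\infty,0\}$ with $\oplus=\min$ and multiplication $+$. For a field $K$ and $F\in K[x_1^{\pm1},\dots,x_n^{\pm1}]$, $\operatorname{trop}(F)=\bigoplus_{\mathbf u\in\operatorname{supp}(F)}\mathbf x^{\mathbf u}\in\mathbb{B}[x_1^{\pm1},\dots,x_n^{\pm1}]$, and for an ideal $J$, $\operatorname{trop}(J)$ is the ideal generated by $\{\operatorname{trop}(F):F\in J\}$. A tropical ideal of the form $\operatorname{trop}(J)$ is realizable over $K$. Polynomials of minimal support are those whose support is minimal (under inclusion) among supports of nonzero-support polynomials in the ideal. *)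

theory Defs
  imports Main "HOL-Library.Poly_Mapping"
begin

text \<open>Laurent polynomials K[x^{+-1}] in one variable are modelled as finitely supported
  functions int =>0 a (exponent to coefficient); the ring structure
  (convolution product) is the one from HOL-Library.Poly_Mapping.\<close>

definition is_ring_ideal :: "'r::comm_ring_1 set \<Rightarrow> bool" where
  "is_ring_ideal J \<longleftrightarrow> 0 \<in> J \<and> (\<forall>f\<in>J. \<forall>g\<in>J. f + g \<in> J) \<and> (\<forall>f\<in>J. \<forall>g. g * f \<in> J)"

text \<open>A polynomial over the Boolean semiring B = {inf, 0} (min, +) is determined by its
  support, a finite subset of Z. Tropical sum = union of supports, tropical product =
  Minkowski sum of supports, zero polynomial = empty set.\<close>

definition minkowski :: "int set \<Rightarrow> int set \<Rightarrow> int set" where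
  "minkowski A B = {a + b | a b. a \<in> A \<and> b \<in> B}"

definition trop :: "(int \<Rightarrow>\<^sub>0 'a::zero) \<Rightarrow> int set" where
  "trop F = Poly_Mapping.keys F"

text \<open>trop(J): the ideal of B[x^{+-1}] generated by all trop(F), F in J, i.e. all finite
  tropical sums of products g * trop(F_i).\<close>

definition trop_ideal :: "(int \<Rightarrow>\<^sub>0 'a::zero) set \<Rightarrow> int set set" where
  "trop_ideal J = {S. \<exists>n (g :: nat \<Rightarrow> int set) f.
      (\<forall>i<n. finite (g i) \<and> f i \<in> J) \<and> S = (\<Union>i<n. minkowski (g i) (trop (f i)))}"

definition circuits4 :: "int set set" where
  "circuits4 = {{u, v} | u v. u \<noteq> v \<and> (4::int) dvd (u - v)}
     \<union> {{u, v, w} | u v w. \<not> (4::int) dvd (u - v) \<and> \<not> (4::int) dvd (u - w)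
                          \<and> \<not> (4::int) dvd (v - w)}"

definition I4 :: "int set set" where
  "I4 = {\<Union>\<A> | \<A>. finite \<A> \<and> \<A> \<subseteq> circuits4}"

end

theory Submission
  imports Defs
begin

lemma I4_circ:
  assumes "S \<in> I4" "x \<in> S"
  shows "\<exists>C\<in>circuits4. x \<in> C \<and> C \<subseteq> S"
proof -
  obtain A where "S = \<Union>A" "A \<subseteq> circuits4" using assms(1) unfolding I4_def by blast
  then show ?thesis using assms(2) by blast
qed

lemma trop_in:
  assumes "F \<in> J"
  shows "Poly_Mapping.keys F \<in> trop_ideal J"
proof -
  have "minkowski {0} (Poly_Mapping.keys F) = Poly_Mapping.keys F"
    unfolding minkowski_def by auto
  then have "Poly_Mapping.keys F = (\<Union>i<(1::nat). minkowski ((\<lambda>_. {0::int}) i) (trop ((\<lambda>_. F) i)))"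
    by (simp add: trop_def lessThan_Suc)
  then show ?thesis unfolding trop_ideal_def using assms
    by (intro CollectI exI[of _ 1] exI[of _ "\<lambda>_. {0::int}"] exI[of _ "\<lambda>_. F"]) simp
qed

lemma keys3_not_I4:
  "{2*c, 2*c+2, 2*(c::int)+4} \<notin> I4"
proof
  assume "{2*c, 2*c+2, 2*(c::int)+4} \<in> I4"
  then obtain C where C: "C \<in> circuits4" "2*c+2 \<in> C" "C \<subseteq> {2*c, 2*c+2, 2*(c::int)+4}"
    using I4_circ by blast
  from C(1) show False unfolding circuits4_def
  proof (elim UnE CollectE exE conjE)
    fix u v assume "C = {u,v}" "u \<noteq> v" "(4::int) dvd (u - v)"
    then show False using C(2,3) by auto
  next
    fix u v w assume h: "C = {u,v,w}" "\<not> (4::int) dvd (u - v)" "\<not> (4::int) dvd (u - w)"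
         "\<not> (4::int) dvd (v - w)"
    then have "u \<in> {2*c, 2*c+2, 2*c+4}" "v \<in> {2*c, 2*c+2, 2*c+4}" "w \<in> {2*c, 2*c+2, 2*c+4}"
      using C(3) by auto
    then show False using h(2-4) by auto
  qed
qed

lemma small_circ:
  assumes "C \<in> circuits4" "\<And>x. x \<in> C \<Longrightarrow> t + x \<in> {0,1,2::int}"
  shows "C = {-t, 1-t, 2-t}"
  using assms(1) unfolding circuits4_def
proof (elim UnE CollectE exE conjE)
  fix u v assume h: "C = {u,v}" "u \<noteq> v" "(4::int) dvd (u - v)"
  have "t + u \<in> {0,1,2}" "t + v \<in> {0,1,2}" using assms(2) h(1) by auto
  then show ?thesis using h(2,3) by auto presburger+
next
  fix u v w assume h: "C = {u,v,w}" "\<not> (4::int) dvd (u - v)" "\<not> (4::int) dvd (u - w)"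
       "\<not> (4::int) dvd (v - w)"
  have "t + u \<in> {0,1,2}" "t + v \<in> {0,1,2}" "t + w \<in> {0,1,2}" using assms(2) h(1) by auto
  then have m: "u \<in> {-t,1-t,2-t}" "v \<in> {-t,1-t,2-t}" "w \<in> {-t,1-t,2-t}" by auto
  have d: "u \<noteq> v" "u \<noteq> w" "v \<noteq> w" using h by auto
  from m d show ?thesis unfolding h(1)
    by (elim insertE emptyE) (simp_all add: insert_commute)
qed

lemma sq3: "((a::'b::comm_ring_1)+b+d)*(a+b+d) = a*a+b*b+d*d+(1+1)*(a*b+a*d+b*d)"
  by (simp add: algebra_simps)

theorem mainTheorem11:
  assumes "CHAR('a::field) = 2"
  shows "\<not> (\<exists>J :: (int \<Rightarrow>\<^sub>0 'a) set. is_ring_ideal J \<and> trop_ideal J = I4)"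
proof
  assume "\<exists>J :: (int \<Rightarrow>\<^sub>0 'a) set. is_ring_ideal J \<and> trop_ideal J = I4"
  then obtain J :: "(int \<Rightarrow>\<^sub>0 'a) set" where J: "is_ring_ideal J" "trop_ideal J = I4" by blast
  have "{0,1,2::int} \<in> circuits4" unfolding circuits4_def
    by (rule UnI2, rule CollectI, rule exI[of _ 0], rule exI[of _ 1], rule exI[of _ 2]) simp
  then have "{0,1,2::int} \<in> I4" unfolding I4_def
    by (intro CollectI exI[of _ "{{0,1,2}}"]) auto
  then have "{0,1,2::int} \<in> trop_ideal J" using J(2) by simp
  then have ex: "\<exists>n (g :: nat \<Rightarrow> int set) f.
      (\<forall>i<n. finite (g i) \<and> f i \<in> J) \<and> {0,1,2::int} = (\<Union>i<n. minkowski (g i) (trop (f i)))"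
    unfolding trop_ideal_def mem_Collect_eq .
  obtain n :: nat and g :: "nat \<Rightarrow> int set" and f :: "nat \<Rightarrow> (int \<Rightarrow>\<^sub>0 'a)" where nf: "\<forall>i<n. finite (g i) \<and> f i \<in> J"
      and eq: "{0,1,2::int} = (\<Union>i<n. minkowski (g i) (trop (f i)))"
    using ex by (elim exE conjE) (rule that, assumption+)
  have "(0::int) \<in> (\<Union>i<n. minkowski (g i) (trop (f i)))" unfolding eq[symmetric] by simp
  then obtain i where i: "i < n" "(0::int) \<in> minkowski (g i) (trop (f i))" by auto
  then obtain t k where tk: "t \<in> g i" "k \<in> Poly_Mapping.keys (f i)" "0 = t + k"
    unfolding minkowski_def trop_def by blast
  define F where "F = f i"
  have FJ: "F \<in> J" using nf i F_def by auto
  have sub: "\<And>x. x \<in> Poly_Mapping.keys F \<Longrightarrow> t + x \<in> {0,1,2}"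
  proof -
    fix x assume "x \<in> Poly_Mapping.keys F"
    then have "t + x \<in> minkowski (g i) (trop (f i))"
      unfolding minkowski_def trop_def F_def using tk by blast
    then show "t + x \<in> {0,1,2}" using eq i by blast
  qed
  have "Poly_Mapping.keys F \<in> I4" using trop_in[OF FJ] J(2) by simp
  then obtain C where C: "C \<in> circuits4" "k \<in> C" "C \<subseteq> Poly_Mapping.keys F"
    using I4_circ tk F_def by blast
  have "C = {-t, 1-t, 2-t}" using small_circ[OF C(1)] sub C(3) by blast
  define c where "c = -t"
  have keysF: "Poly_Mapping.keys F = {c, c+1, c+2}"
  proof
    show "Poly_Mapping.keys F \<subseteq> {c, c+1, c+2}"
    proof
      fix x assume "x \<in> Poly_Mapping.keys F"
      then have "t + x \<in> {0,1,2}" by (rule sub)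
      then show "x \<in> {c, c+1, c+2}" unfolding c_def by auto
    qed
    show "{c, c+1, c+2} \<subseteq> Poly_Mapping.keys F" using C(3) \<open>C = _\<close> unfolding c_def by auto
  qed
  define A where "A = Poly_Mapping.lookup F c"
  define B where "B = Poly_Mapping.lookup F (c+1)"
  define D where "D = Poly_Mapping.lookup F (c+2)"
  have nz: "A \<noteq> 0" "B \<noteq> 0" "D \<noteq> 0" using keysF unfolding A_def B_def D_def in_keys_iff by auto
  have Feq: "F = Poly_Mapping.single c A + Poly_Mapping.single (c+1) B + Poly_Mapping.single (c+2) D"
  proof (rule poly_mapping_eqI)
    fix j
    show "Poly_Mapping.lookup F j = Poly_Mapping.lookup (Poly_Mapping.single c A + Poly_Mapping.single (c+1) B + Poly_Mapping.single (c+2) D) j"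
    proof (cases "j \<in> {c, c+1, c+2}")
      case True
      then consider "j = c" | "j = c+1" | "j = c+2" by blast
      then show ?thesis
        by cases (simp_all add: lookup_add lookup_single_not_eq A_def B_def D_def)
    next
      case False
      then have "j \<notin> Poly_Mapping.keys F" unfolding keysF .
      then have "Poly_Mapping.lookup F j = 0" by (simp add: not_in_keys_iff_lookup_eq_zero)
      moreover have "c \<noteq> j" "c+1 \<noteq> j" "c+2 \<noteq> j" using False by auto
      ultimately show ?thesis by (simp add: lookup_add lookup_single_not_eq)
    qed
  qed
  have two: "(1 + 1 :: int \<Rightarrow>\<^sub>0 'a) = 0"
  proof -
    have "(1 + 1 :: 'a) = 0" using of_nat_CHAR[where 'a='a] assms by simp
    then have "Poly_Mapping.single (0::int) (1 + 1 :: 'a) = 0" by simp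
    then show ?thesis by (simp add: single_add)
  qed
  define m1 where "m1 = Poly_Mapping.single c A"
  define m2 where "m2 = Poly_Mapping.single (c+1) B"
  define m3 where "m3 = Poly_Mapping.single (c+2) D"
  have x1: "c + c = 2*c" "c+1+(c+1) = 2*c+2" "c+2+(c+2) = 2*c+4" by linarith+
  have e1: "m1*m1 = Poly_Mapping.single (2*c) (A*A)" unfolding m1_def mult_single x1 by (rule refl)
  have e2: "m2*m2 = Poly_Mapping.single (2*c+2) (B*B)" unfolding m2_def mult_single x1 by (rule refl)
  have e3: "m3*m3 = Poly_Mapping.single (2*c+4) (D*D)" unfolding m3_def mult_single x1 by (rule refl)
  have "F * F = m1*m1 + m2*m2 + m3*m3 + (1+1) * (m1*m2 + m1*m3 + m2*m3)"
    unfolding Feq m1_def[symmetric] m2_def[symmetric] m3_def[symmetric] by (rule sq3)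
  then have FF: "F * F = Poly_Mapping.single (2*c) (A*A) + Poly_Mapping.single (2*c+2) (B*B)
      + Poly_Mapping.single (2*c+4) (D*D)" unfolding two e1 e2 e3 by simp
  have "Poly_Mapping.keys (F * F) = {2*c, 2*c+2, 2*c+4}"
  proof -
    have "\<And>j. Poly_Mapping.lookup (F*F) j \<noteq> 0 \<longleftrightarrow> j \<in> {2*c, 2*c+2, 2*c+4}"
      unfolding FF using nz by (auto simp: lookup_add lookup_single)
    then show ?thesis by (auto simp: in_keys_iff)
  qed
  moreover have "F * F \<in> J" using J(1) FJ unfolding is_ring_ideal_def by blast
  ultimately have "{2*c, 2*c+2, 2*c+4} \<in> I4" using trop_in J(2) by metis
  then show False using keys3_not_I4 by blast
qed

end
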